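(* Let $A$ be a commutative ring, $p\ge1$, and $W$, $E$ as defined below. Let $F=\{F_i\}_{i\ge0}$ be a graded left $W$-module (so $F_i=0$ for $i<0$) with $F_0\neq0$. Then $F_i\ne0$ for every $0\le i\le p$. Moreover, if $F_i=0$ for all $i\ge p+1$, then the map $W\otimes_AF_0\to F$, $w\otimes f\mapsto wf$, induces an isomorphism of graded left $W$-modules \[ E\otimes_AF_0\xrightarrow{\ \cong\ }F . \]
   Context: $W$ is the graded $A$-algebra $A\langle s_1,\dots,s_p,t_1,\dots,t_p\rangle/(s_it_j+t_js_i-\delta_{ij}\mid1\le i,j\le p)$, where $A\langle\cdots\rangle$ is the free associative $A$-algebra, $|s_i|=1$, $|t_i|=-1$, and $\delta_{ij}$ is the Kronecker delta. $E$ is the quotient of $W$ by the left ideal generated by the elements $t_i$, $s_i^2$, and $s_is_j+s_js_i$ for $1\le i,j\le p$; it is a graded left $W$-module, which as an $A$-module is the exterior algebra $A[\boldsymbol s]$ on $s_1,\dots,s_p$ (free with basis the monomials $s_{i_1}\cdots s_{i_n}$, $i_1<\cdots<i_n$), with $t_i$ acting as graded derivations satisfying $t_i\cdot s_j=\delta_{ij}$. $E\otimes_AF_0$ is a graded left $W$-module via the action on $E$, with $F_0$ in degree $0$. *)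

theory Defs
  imports Main "HOL.Modules"
begin

definition lin_on :: "('a::comm_ring_1 \<Rightarrow> 'm::ab_group_add \<Rightarrow> 'm) \<Rightarrow> 'm set \<Rightarrow> 'm set \<Rightarrow> ('m \<Rightarrow> 'm) \<Rightarrow> bool"
  where "lin_on scale X Y f \<longleftrightarrow>
     (\<forall>x\<in>X. f x \<in> Y) \<and> (\<forall>x\<in>X. \<forall>y\<in>X. f (x + y) = f x + f y) \<and>
     (\<forall>c. \<forall>x\<in>X. f (scale c x) = scale c (f x))"

text \<open>A graded left W-module F = (F_i)_{i \<ge> 0} (F_i = 0 for i < 0), W generated over A by
  s_1..s_p (degree 1) and t_1..t_p (degree -1) subject to s_j t_k + t_k s_j = delta_jk.
  The components F_i are submodules of an ambient A-module (scale).
  s j i is the action of s_j on F_i (into F_(i+1)); t j i (i \<ge> 1) is the action of t_j on F_i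
  (into F_(i-1)); t_j acts as zero on F_0 since F_(-1) = 0.\<close>
definition graded_W_module ::
  "('a::comm_ring_1 \<Rightarrow> 'm::ab_group_add \<Rightarrow> 'm) \<Rightarrow> nat \<Rightarrow> (nat \<Rightarrow> 'm set)
     \<Rightarrow> (nat \<Rightarrow> nat \<Rightarrow> 'm \<Rightarrow> 'm) \<Rightarrow> (nat \<Rightarrow> nat \<Rightarrow> 'm \<Rightarrow> 'm) \<Rightarrow> bool"
  where "graded_W_module scale p F s t \<longleftrightarrow>
     module scale \<and> (\<forall>i. module.subspace scale (F i)) \<and>
     (\<forall>j\<in>{1..p}. \<forall>i. lin_on scale (F i) (F (Suc i)) (s j i) \<and>
                      lin_on scale (F (Suc i)) (F i) (t j (Suc i))) \<and>
     (\<forall>j\<in>{1..p}. \<forall>k\<in>{1..p}.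
        (\<forall>x\<in>F 0. t k 1 (s j 0 x) = (if j = k then x else 0)) \<and>
        (\<forall>i. \<forall>x\<in>F (Suc i).
           s j i (t k (Suc i) x) + t k (Suc (Suc i)) (s j (Suc i) x) = (if j = k then x else 0)))"

fun s_mon :: "(nat \<Rightarrow> nat \<Rightarrow> 'm \<Rightarrow> 'm) \<Rightarrow> nat list \<Rightarrow> 'm \<Rightarrow> 'm" where
  "s_mon s [] x = x"
| "s_mon s (j # js) x = s j (length js) (s_mon s js x)"

text \<open>Degree-i part of E \<otimes>_A F_0: since E_i is A-free with basis the monomials s_S,
  S \<subseteq> {1..p}, |S| = i (increasing order), E_i \<otimes>_A F_0 = direct sum over such S of F_0;
  an element is a finitely supported family g with g S \<in> F_0.\<close>
definition EF0 :: "nat \<Rightarrow> (nat \<Rightarrow> 'm::zero set) \<Rightarrow> nat \<Rightarrow> (nat set \<Rightarrow> 'm) set"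
  where "EF0 p F i = {g. (\<forall>S. g S \<in> F 0) \<and> (\<forall>S. g S \<noteq> 0 \<longrightarrow> S \<subseteq> {1..p} \<and> card S = i)}"

definition mult_map :: "nat \<Rightarrow> (nat \<Rightarrow> nat \<Rightarrow> 'm \<Rightarrow> 'm) \<Rightarrow> nat \<Rightarrow> (nat set \<Rightarrow> 'm) \<Rightarrow> 'm::comm_monoid_add"
  where "mult_map p s i g = (\<Sum>S\<in>{S. S \<subseteq> {1..p} \<and> card S = i}. s_mon s (sorted_list_of_set S) (g S))"

end

theory Submission imports Defs begin

lemma lin_basic:
  assumes m: "module scale" and X: "module.subspace scale X" and l: "lin_on scale X Y f"
  shows "f 0 = 0" "x \<in> X \<Longrightarrow> f (- x) = - f x"
    "x \<in> X \<Longrightarrow> y \<in> X \<Longrightarrow> f (x - y) = f x - f y"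
    "x \<in> X \<Longrightarrow> y \<in> X \<Longrightarrow> f (x + y) = f x + f y"
    "x \<in> X \<Longrightarrow> f x \<in> Y"
proof -
  have z: "0 \<in> X" using module.subspace_0[OF m X] .
  have a: "\<And>x y. x \<in> X \<Longrightarrow> y \<in> X \<Longrightarrow> f (x + y) = f x + f y" using l unfolding lin_on_def by blast
  from a[OF z z] show f0: "f 0 = 0" by simp
  show "x \<in> X \<Longrightarrow> f (- x) = - f x"
  proof -
    assume x: "x \<in> X"
    have "-x \<in> X" using module.subspace_neg[OF m X x] .
    from a[OF x this] f0 have "f x + f (- x) = 0" by simp
    then show ?thesis by (rule minus_unique[symmetric])
  qed
  show "x \<in> X \<Longrightarrow> y \<in> X \<Longrightarrow> f (x - y) = f x - f y"
  proof -
    assume x: "x \<in> X" and y: "y \<in> X"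
    have "x - y \<in> X" using module.subspace_diff[OF m X x y] .
    from a[OF this y] show ?thesis by (simp add: eq_diff_eq)
  qed
  show "x \<in> X \<Longrightarrow> y \<in> X \<Longrightarrow> f (x + y) = f x + f y" by (rule a)
  show "x \<in> X \<Longrightarrow> f x \<in> Y" using l unfolding lin_on_def by blast
qed

lemma lin_sum:
  assumes m: "module scale" and X: "module.subspace scale X" and l: "lin_on scale X Y f"
  shows "(\<And>a. a \<in> B \<Longrightarrow> v a \<in> X) \<Longrightarrow> f (sum v B) = (\<Sum>a\<in>B. f (v a))"
proof (induction B rule: infinite_finite_induct)
  case (infinite A) then show ?case using lin_basic(1)[OF m X l] by simp
next
  case empty then show ?case using lin_basic(1)[OF m X l] by simp
next
  case (insert x F)
  have "sum v F \<in> X" using module.subspace_sum[OF m X] insert.prems by blast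
  then show ?case using insert lin_basic(4)[OF m X l] by simp
qed

fun sg :: "(nat \<Rightarrow> nat \<Rightarrow> 'm \<Rightarrow> 'm) \<Rightarrow> nat \<Rightarrow> nat list \<Rightarrow> 'm \<Rightarrow> 'm" where
  "sg s i [] x = x"
| "sg s i (j # js) x = s j (i + length js) (sg s i js x)"

lemma s_mon_sg: "s_mon s L x = sg s 0 L x"
  by (induction L) auto

lemma sg_append: "sg s i C (sg s 0 L x) = sg s 0 (C @ L) x" if "i = length L"
  using that by (induction C) (auto simp: add.commute)

locale gw =
  fixes scale :: "'a::comm_ring_1 \<Rightarrow> 'm::ab_group_add \<Rightarrow> 'm"
    and p :: nat and F :: "nat \<Rightarrow> 'm set"
    and s t :: "nat \<Rightarrow> nat \<Rightarrow> 'm \<Rightarrow> 'm"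
  assumes G: "graded_W_module scale p F s t"
begin

lemma md: "module scale" using G unfolding graded_W_module_def by blast
lemma sub: "module.subspace scale (F i)" using G unfolding graded_W_module_def by blast
lemma F0: "0 \<in> F i" using module.subspace_0[OF md sub] .
lemma Fadd: "x \<in> F i \<Longrightarrow> y \<in> F i \<Longrightarrow> x + y \<in> F i" using module.subspace_add[OF md sub] .
lemma Fneg: "x \<in> F i \<Longrightarrow> - x \<in> F i" using module.subspace_neg[OF md sub] .
lemma Fdiff: "x \<in> F i \<Longrightarrow> y \<in> F i \<Longrightarrow> x - y \<in> F i" using module.subspace_diff[OF md sub] .
lemma Fsum: "(\<And>a. a \<in> B \<Longrightarrow> v a \<in> F i) \<Longrightarrow> sum v B \<in> F i" using module.subspace_sum[OF md sub] .

lemma slin: "j \<in> {1..p} \<Longrightarrow> lin_on scale (F i) (F (Suc i)) (s j i)"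
  using G unfolding graded_W_module_def by blast
lemma tlin: "j \<in> {1..p} \<Longrightarrow> lin_on scale (F (Suc i)) (F i) (t j (Suc i))"
  using G unfolding graded_W_module_def by blast

lemmas sb = lin_basic[OF md sub slin]
lemmas tb = lin_basic[OF md sub tlin]

lemma R0: "j \<in> {1..p} \<Longrightarrow> k \<in> {1..p} \<Longrightarrow> x \<in> F 0 \<Longrightarrow> t k 1 (s j 0 x) = (if j = k then x else 0)"
  using G unfolding graded_W_module_def by blast
lemma R1: "j \<in> {1..p} \<Longrightarrow> k \<in> {1..p} \<Longrightarrow> x \<in> F (Suc i) \<Longrightarrow>
   s j i (t k (Suc i) x) + t k (Suc (Suc i)) (s j (Suc i) x) = (if j = k then x else 0)"
  using G unfolding graded_W_module_def by blast


lemma sgF: "x \<in> F i \<Longrightarrow> set L \<subseteq> {1..p} \<Longrightarrow> sg s i L x \<in> F (i + length L)"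
  by (induction L) (auto intro: sb(5))

lemma sg_lin: "set C \<subseteq> {1..p} \<Longrightarrow> lin_on scale (F i) (F (i + length C)) (sg s i C)"
proof (induction C)
  case Nil then show ?case by (simp add: lin_on_def)
next
  case (Cons j js)
  then have IH: "lin_on scale (F i) (F (i + length js)) (sg s i js)" and j: "j \<in> {1..p}" by auto
  have l: "lin_on scale (F (i + length js)) (F (Suc (i + length js))) (s j (i + length js))"
    using slin[OF j] .
  show ?case using IH l unfolding lin_on_def by auto
qed

lemma gen:
  assumes "x \<in> F i" "distinct L" "set L \<subseteq> {1..p}" "1 \<le> i \<longrightarrow> (\<forall>k\<in>{1..p}. t k i x = 0)"
  shows "(1 \<le> i + length L \<longrightarrow> (\<forall>k\<in>{1..p} - set L. t k (i + length L) (sg s i L x) = 0)) \<and>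
         (sg s i L x = 0 \<longrightarrow> x = 0)"
  using assms(2,3)
proof (induction L)
  case Nil then show ?case using assms(4) by auto
next
  case (Cons j js)
  let ?y = "sg s i js x"
  have j: "j \<in> {1..p}" and jn: "j \<notin> set js" using Cons.prems by auto
  have IH: "(1 \<le> i + length js \<longrightarrow> (\<forall>k\<in>{1..p} - set js. t k (i + length js) ?y = 0)) \<and> (?y = 0 \<longrightarrow> x = 0)"
    using Cons by auto
  have yF: "?y \<in> F (i + length js)" using sgF[OF assms(1)] Cons.prems by auto
  show ?case
  proof (cases "i + length js")
    case 0
    then have i0: "i = 0" and js: "js = []" by auto
    have "\<forall>k\<in>{1..p} - set (j # js). t k (i + length (j # js)) (sg s i (j # js) x) = 0"
      using R0[OF j _ assms(1)[unfolded i0]] js i0 by auto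
    moreover have "sg s i (j # js) x = 0 \<longrightarrow> x = 0"
      using R0[OF j j assms(1)[unfolded i0]] js i0 tb(1)[OF j] by auto
    ultimately show ?thesis by blast
  next
    case (Suc m)
    have yF': "?y \<in> F (Suc m)" using yF Suc by simp
    have eq: "sg s i (j # js) x = s j (Suc m) ?y" using Suc by simp
    have A: "\<forall>k\<in>{1..p} - set (j # js). t k (i + length (j # js)) (sg s i (j # js) x) = 0"
    proof
      fix k assume k: "k \<in> {1..p} - set (j # js)"
      have tk: "t k (Suc m) ?y = 0" using IH k Suc by auto
      have "s j m (t k (Suc m) ?y) + t k (Suc (Suc m)) (s j (Suc m) ?y) = 0"
        using R1[OF j _ yF', of k] k by auto
      then have "t k (Suc (Suc m)) (s j (Suc m) ?y) = 0" using tk sb(1)[OF j] by simp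
      then show "t k (i + length (j # js)) (sg s i (j # js) x) = 0" using eq Suc by simp
    qed
    have B: "sg s i (j # js) x = 0 \<longrightarrow> x = 0"
    proof
      assume z: "sg s i (j # js) x = 0"
      have tj: "t j (Suc m) ?y = 0" using IH jn j Suc by auto
      have "s j m (t j (Suc m) ?y) + t j (Suc (Suc m)) (s j (Suc m) ?y) = ?y"
        using R1[OF j j yF'] by simp
      then have "?y = 0" using tj z eq sb(1)[OF j] tb(1)[OF j] by simp
      then show "x = 0" using IH by simp
    qed
    show ?thesis using A B by blast
  qed
qed

lemma tsS: "j \<in> {1..p} \<Longrightarrow> m \<in> {1..p} \<Longrightarrow> y \<in> F (Suc d) \<Longrightarrow>
  t m (Suc (Suc d)) (s j (Suc d) y) = (if j = m then y else 0) - s j d (t m (Suc d) y)"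
  using R1[of j m y d] by (simp add: eq_diff_eq add.commute)

lemma TSS0: "j \<in> {1..p} \<Longrightarrow> k \<in> {1..p} \<Longrightarrow> m \<in> {1..p} \<Longrightarrow> y \<in> F 0 \<Longrightarrow>
  t m (Suc (Suc 0)) (s j (Suc 0) (s k 0 y)) = (if j = m then s k 0 y else 0) - (if k = m then s j 0 y else 0)"
proof -
  assume a: "j \<in> {1..p}" "k \<in> {1..p}" "m \<in> {1..p}" "y \<in> F 0"
  have "s k 0 y \<in> F (Suc 0)" using sb(5)[OF a(2) a(4)] .
  from tsS[OF a(1) a(3) this] have "t m (Suc (Suc 0)) (s j (Suc 0) (s k 0 y)) = (if j = m then s k 0 y else 0) - s j 0 (t m 1 (s k 0 y))"
    by simp
  also have "\<dots> = (if j = m then s k 0 y else 0) - (if k = m then s j 0 y else 0)"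
    using R0[OF a(2) a(3) a(4)] sb(1)[OF a(1)] by simp
  finally show ?thesis .
qed

lemma TSS: "j \<in> {1..p} \<Longrightarrow> k \<in> {1..p} \<Longrightarrow> m \<in> {1..p} \<Longrightarrow> y \<in> F (Suc d) \<Longrightarrow>
  t m (Suc (Suc (Suc d))) (s j (Suc (Suc d)) (s k (Suc d) y)) =
   (if j = m then s k (Suc d) y else 0) - (if k = m then s j (Suc d) y else 0) + s j (Suc d) (s k d (t m (Suc d) y))"
proof -
  assume a: "j \<in> {1..p}" "k \<in> {1..p}" "m \<in> {1..p}" "y \<in> F (Suc d)"
  have "s k (Suc d) y \<in> F (Suc (Suc d))" using sb(5)[OF a(2) a(4)] .
  from tsS[OF a(1) a(3) this] have "t m (Suc (Suc (Suc d))) (s j (Suc (Suc d)) (s k (Suc d) y)) =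
     (if j = m then s k (Suc d) y else 0) - s j (Suc d) (t m (Suc (Suc d)) (s k (Suc d) y))" .
  also have "t m (Suc (Suc d)) (s k (Suc d) y) = (if k = m then y else 0) - s k d (t m (Suc d) y)"
    using tsS[OF a(2) a(3) a(4)] .
  also have "s j (Suc d) ((if k = m then y else 0) - s k d (t m (Suc d) y)) =
      (if k = m then s j (Suc d) y else 0) - s j (Suc d) (s k d (t m (Suc d) y))"
  proof -
    have t1: "t m (Suc d) y \<in> F d" using tb(5)[OF a(3) a(4)] .
    have "s k d (t m (Suc d) y) \<in> F (Suc d)" using sb(5)[OF a(2) t1] .
    moreover have "(if k = m then y else 0) \<in> F (Suc d)" using a(4) F0 by auto
    ultimately show ?thesis using sb(3)[OF a(1)] sb(1)[OF a(1)] by auto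
  qed
  finally show ?thesis by (simp add: algebra_simps)
qed

lemma DK: "w \<in> F d \<Longrightarrow> J \<subseteq> {1..p} \<Longrightarrow> d < card J \<Longrightarrow> (\<forall>k\<in>J. s k d w = 0) \<Longrightarrow> w = 0"
proof (induction d arbitrary: w J)
  case 0
  then obtain k where k: "k \<in> J" by fastforce
  then have kp: "k \<in> {1..p}" using 0 by auto
  have "t k 1 (s k 0 w) = w" using R0[OF kp kp 0(1)] by simp
  then show ?case using 0(4) k tb(1)[OF kp] by simp
next
  case (Suc d)
  then obtain j where j: "j \<in> J" by fastforce
  then have jp: "j \<in> {1..p}" using Suc by auto
  have fin: "finite J" using Suc.prems(2) finite_subset by blast
  let ?u = "t j (Suc d) w"
  have uF: "?u \<in> F d" using tb(5)[OF jp Suc.prems(1)] .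
  have "\<forall>k\<in>J - {j}. s k d ?u = 0"
  proof
    fix k assume k: "k \<in> J - {j}"
    then have kp: "k \<in> {1..p}" using Suc.prems(2) by auto
    have "s k d ?u + t j (Suc (Suc d)) (s k (Suc d) w) = 0" using R1[OF kp jp Suc.prems(1)] k by auto
    then show "s k d ?u = 0" using Suc.prems(4) k tb(1)[OF jp] by simp
  qed
  moreover have "d < card (J - {j})" using Suc.prems(3) fin j by simp
  ultimately have u0: "?u = 0" using Suc.IH[OF uF, of "J - {j}"] Suc.prems(2) by blast
  have "s j d ?u + t j (Suc (Suc d)) (s j (Suc d) w) = w" using R1[OF jp jp Suc.prems(1)] by simp
  then show ?case using u0 Suc.prems(4) j sb(1)[OF jp] tb(1)[OF jp] by simp
qed

lemma STT: "j \<in> {1..p} \<Longrightarrow> m \<in> {1..p} \<Longrightarrow> l \<in> {1..p} \<Longrightarrow> z \<in> F (Suc (Suc n)) \<Longrightarrow>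
  s j n (t m (Suc n) (t l (Suc (Suc n)) z)) = (if j = m then t l (Suc (Suc n)) z else 0)
     - (if j = l then t m (Suc (Suc n)) z else 0)
     + t m (Suc (Suc n)) (t l (Suc (Suc (Suc n))) (s j (Suc (Suc n)) z))"
proof -
  assume jp: "j \<in> {1..p}" and mp: "m \<in> {1..p}" and lp: "l \<in> {1..p}" and z: "z \<in> F (Suc (Suc n))"
  let ?a = "t l (Suc (Suc n)) z"
  have a: "?a \<in> F (Suc n)" using tb(5)[OF lp z] .
  have e1: "s j n (t m (Suc n) ?a) = (if j = m then ?a else 0) - t m (Suc (Suc n)) (s j (Suc n) ?a)"
    using R1[OF jp mp a] by (simp add: eq_diff_eq)
  have e2: "s j (Suc n) ?a = (if j = l then z else 0) - t l (Suc (Suc (Suc n))) (s j (Suc (Suc n)) z)"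
    using R1[OF jp lp z] by (simp add: eq_diff_eq)
  have X: "t l (Suc (Suc (Suc n))) (s j (Suc (Suc n)) z) \<in> F (Suc (Suc n))" using tb(5)[OF lp sb(5)[OF jp z]] .
  have zz: "(if j = l then z else 0) \<in> F (Suc (Suc n))" using z F0 by auto
  have e3: "t m (Suc (Suc n)) ((if j = l then z else 0) - t l (Suc (Suc (Suc n))) (s j (Suc (Suc n)) z))
     = (if j = l then t m (Suc (Suc n)) z else 0) - t m (Suc (Suc n)) (t l (Suc (Suc (Suc n))) (s j (Suc (Suc n)) z))"
    using tb(3)[OF mp zz X] tb(1)[OF mp] by auto
  show ?thesis unfolding e1 e2 e3 by (simp add: algebra_simps)
qed

lemma smon_lin: "set L \<subseteq> {1..p} \<Longrightarrow> lin_on scale (F 0) (F (length L)) (s_mon s L)"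
  using sg_lin[of L 0] by (simp add: s_mon_sg[abs_def])

lemmas smb = lin_basic[OF md sub smon_lin]

lemma finSets: "finite {S. S \<subseteq> {1..p} \<and> card S = n}"
  by (rule finite_subset[of _ "Pow {1..p}"]) auto

lemma sorted_S: "S \<in> {S. S \<subseteq> {1..p} \<and> card S = n} \<Longrightarrow>
   set (sorted_list_of_set S) = S \<and> length (sorted_list_of_set S) = n \<and> distinct (sorted_list_of_set S) \<and> set (sorted_list_of_set S) \<subseteq> {1..p}"
proof -
  assume a: "S \<in> {S. S \<subseteq> {1..p} \<and> card S = n}"
  then have "finite S" using finite_subset by auto
  then show ?thesis using a by auto
qed

lemma mm_F: "g \<in> EF0 p F n \<Longrightarrow> mult_map p s n g \<in> F n"
  unfolding mult_map_def
proof (rule Fsum)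
  fix S assume g: "g \<in> EF0 p F n" and S: "S \<in> {S. S \<subseteq> {1..p} \<and> card S = n}"
  have gs: "g S \<in> F 0" using g unfolding EF0_def by auto
  show "s_mon s (sorted_list_of_set S) (g S) \<in> F n"
    using smb(5)[OF _ gs, of "sorted_list_of_set S"] sorted_S[OF S] by auto
qed

lemma EF0_add: "g \<in> EF0 p F n \<Longrightarrow> h \<in> EF0 p F n \<Longrightarrow> (\<lambda>S. g S + h S) \<in> EF0 p F n"
proof -
  assume g: "g \<in> EF0 p F n" and h: "h \<in> EF0 p F n"
  have a: "\<And>S. g S + h S \<in> F 0" using g h unfolding EF0_def by (blast intro: Fadd)
  have b: "\<And>S. g S + h S \<noteq> 0 \<Longrightarrow> S \<subseteq> {1..p} \<and> card S = n"
  proof -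
    fix S assume "g S + h S \<noteq> 0"
    then have "g S \<noteq> 0 \<or> h S \<noteq> 0" by auto
    then show "S \<subseteq> {1..p} \<and> card S = n" using g h unfolding EF0_def by blast
  qed
  show ?thesis unfolding EF0_def using a b by blast
qed
lemma EF0_diff: "g \<in> EF0 p F n \<Longrightarrow> h \<in> EF0 p F n \<Longrightarrow> (\<lambda>S. g S - h S) \<in> EF0 p F n"
proof -
  assume g: "g \<in> EF0 p F n" and h: "h \<in> EF0 p F n"
  have a: "\<And>S. g S - h S \<in> F 0" using g h unfolding EF0_def by (blast intro: Fdiff)
  have b: "\<And>S. g S - h S \<noteq> 0 \<Longrightarrow> S \<subseteq> {1..p} \<and> card S = n"
  proof -
    fix S assume "g S - h S \<noteq> 0"
    then have "g S \<noteq> 0 \<or> h S \<noteq> 0" by auto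
    then show "S \<subseteq> {1..p} \<and> card S = n" using g h unfolding EF0_def by blast
  qed
  show ?thesis unfolding EF0_def using a b by blast
qed
lemma EF0_zero: "(\<lambda>S. 0) \<in> EF0 p F n"
  unfolding EF0_def using F0 by auto

lemma mm_add: "g \<in> EF0 p F n \<Longrightarrow> h \<in> EF0 p F n \<Longrightarrow> mult_map p s n (\<lambda>S. g S + h S) = mult_map p s n g + mult_map p s n h"
  unfolding mult_map_def sum.distrib[symmetric]
proof (rule sum.cong)
  fix S assume g: "g \<in> EF0 p F n" and h: "h \<in> EF0 p F n" and S: "S \<in> {S. S \<subseteq> {1..p} \<and> card S = n}"
  have "g S \<in> F 0" "h S \<in> F 0" using g h unfolding EF0_def by auto
  then show "s_mon s (sorted_list_of_set S) (g S + h S) = s_mon s (sorted_list_of_set S) (g S) + s_mon s (sorted_list_of_set S) (h S)"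
    using smb(4) sorted_S[OF S] by blast
qed simp

lemma mm_diff: "g \<in> EF0 p F n \<Longrightarrow> h \<in> EF0 p F n \<Longrightarrow> mult_map p s n (\<lambda>S. g S - h S) = mult_map p s n g - mult_map p s n h"
  unfolding mult_map_def sum_subtractf[symmetric]
proof (rule sum.cong)
  fix S assume g: "g \<in> EF0 p F n" and h: "h \<in> EF0 p F n" and S: "S \<in> {S. S \<subseteq> {1..p} \<and> card S = n}"
  have "g S \<in> F 0" "h S \<in> F 0" using g h unfolding EF0_def by auto
  then show "s_mon s (sorted_list_of_set S) (g S - h S) = s_mon s (sorted_list_of_set S) (g S) - s_mon s (sorted_list_of_set S) (h S)"
    using smb(3) sorted_S[OF S] by blast
qed simp

lemma mm_zero: "mult_map p s n (\<lambda>S. 0) = 0"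
  unfolding mult_map_def
proof (intro sum.neutral ballI)
  fix S assume "S \<in> {S. S \<subseteq> {1..p} \<and> card S = n}"
  then have "set (sorted_list_of_set S) \<subseteq> {1..p}" using sorted_S by blast
  then show "s_mon s (sorted_list_of_set S) 0 = 0" by (rule smb(1))
qed

lemma M_add: "a \<in> mult_map p s n ` EF0 p F n \<Longrightarrow> b \<in> mult_map p s n ` EF0 p F n \<Longrightarrow> a + b \<in> mult_map p s n ` EF0 p F n"
proof -
  assume "a \<in> mult_map p s n ` EF0 p F n" "b \<in> mult_map p s n ` EF0 p F n"
  then obtain g h where g: "g \<in> EF0 p F n" "a = mult_map p s n g" and h: "h \<in> EF0 p F n" "b = mult_map p s n h" by blast
  then have "a + b = mult_map p s n (\<lambda>S. g S + h S)" using mm_add by simp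
  then show ?thesis using EF0_add[OF g(1) h(1)] by blast
qed

lemma M_zero: "0 \<in> mult_map p s n ` EF0 p F n"
  using mm_zero EF0_zero by (metis image_eqI)

lemma M_sum: "(\<And>b. b \<in> B \<Longrightarrow> v b \<in> mult_map p s n ` EF0 p F n) \<Longrightarrow> sum v B \<in> mult_map p s n ` EF0 p F n"
  by (induction B rule: infinite_finite_induct) (auto simp: M_zero M_add)

end

locale gwt = gw +
  assumes top: "\<forall>i\<ge>p + 1. F i = {0}"
begin

lemma Kl: "1 \<le> n \<Longrightarrow> x \<in> F n \<Longrightarrow> (\<And>k. k \<in> {1..p} \<Longrightarrow> t k n x = 0) \<Longrightarrow> x = 0"
proof -
  assume a: "1 \<le> n" "x \<in> F n" "\<And>k. k \<in> {1..p} \<Longrightarrow> t k n x = 0"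
  let ?L = "[1..<Suc p]"
  have d: "distinct ?L" and st: "set ?L \<subseteq> {1..p}" by auto
  have h4: "1 \<le> n \<longrightarrow> (\<forall>k\<in>{1..p}. t k n x = 0)" using a(3) by blast
  have g: "sg s n ?L x = 0 \<longrightarrow> x = 0" using gen[OF a(2) d st h4] by blast
  have "sg s n ?L x \<in> F (n + p)" using sgF[OF a(2) st] by (simp only: length_upt diff_Suc_1)
  then have "sg s n ?L x = 0" using top a(1) by auto
  then show ?thesis using g by simp
qed

lemma SS: "y \<in> F d \<Longrightarrow> j \<in> {1..p} \<Longrightarrow> k \<in> {1..p} \<Longrightarrow>
   s j (Suc d) (s j d y) = 0 \<and> s j (Suc d) (s k d y) + s k (Suc d) (s j d y) = 0"
proof (induction d arbitrary: y j k)
  case 0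
  have jj: "s j (Suc 0) (s j 0 y) \<in> F (Suc (Suc 0))" "s j (Suc 0) (s k 0 y) \<in> F (Suc (Suc 0))" "s k (Suc 0) (s j 0 y) \<in> F (Suc (Suc 0))"
    using sb(5) 0 by auto
  have "s j (Suc 0) (s j 0 y) = 0"
    by (rule Kl[of "Suc (Suc 0)"]) (use jj 0 TSS0 in auto)
  moreover have "s j (Suc 0) (s k 0 y) + s k (Suc 0) (s j 0 y) = 0"
  proof (rule Kl[of "Suc (Suc 0)"])
    fix m assume m: "m \<in> {1..p}"
    show "t m (Suc (Suc 0)) (s j (Suc 0) (s k 0 y) + s k (Suc 0) (s j 0 y)) = 0"
      using TSS0[OF 0(2) 0(3) m 0(1)] TSS0[OF 0(3) 0(2) m 0(1)] tb(4)[OF m jj(2) jj(3)] by simp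
  qed (use jj Fadd in auto)
  ultimately show ?case by simp
next
  case (Suc d)
  have tm: "\<And>m. m \<in> {1..p} \<Longrightarrow> t m (Suc d) y \<in> F d" using tb(5) Suc.prems by auto
  have jj: "s j (Suc (Suc d)) (s j (Suc d) y) \<in> F (Suc (Suc (Suc d)))" "s j (Suc (Suc d)) (s k (Suc d) y) \<in> F (Suc (Suc (Suc d)))" "s k (Suc (Suc d)) (s j (Suc d) y) \<in> F (Suc (Suc (Suc d)))"
    using sb(5) Suc.prems by auto
  have "s j (Suc (Suc d)) (s j (Suc d) y) = 0"
  proof (rule Kl[of "Suc (Suc (Suc d))"])
    fix m assume m: "m \<in> {1..p}"
    show "t m (Suc (Suc (Suc d))) (s j (Suc (Suc d)) (s j (Suc d) y)) = 0"
      using TSS[OF Suc.prems(2) Suc.prems(2) m Suc.prems(1)] Suc.IH[OF tm[OF m] Suc.prems(2) Suc.prems(2)] by simp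
  qed (use jj in auto)
  moreover have "s j (Suc (Suc d)) (s k (Suc d) y) + s k (Suc (Suc d)) (s j (Suc d) y) = 0"
  proof (rule Kl[of "Suc (Suc (Suc d))"])
    fix m assume m: "m \<in> {1..p}"
    show "t m (Suc (Suc (Suc d))) (s j (Suc (Suc d)) (s k (Suc d) y) + s k (Suc (Suc d)) (s j (Suc d) y)) = 0"
      unfolding tb(4)[OF m jj(2) jj(3)] TSS[OF Suc.prems(2) Suc.prems(3) m Suc.prems(1)] TSS[OF Suc.prems(3) Suc.prems(2) m Suc.prems(1)]
    proof -
      let ?A = "(if j = m then s k (Suc d) y else 0)" and ?B = "(if k = m then s j (Suc d) y else 0)"
      have "?A - ?B + s j (Suc d) (s k d (t m (Suc d) y)) + (?B - ?A + s k (Suc d) (s j d (t m (Suc d) y)))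
         = s j (Suc d) (s k d (t m (Suc d) y)) + s k (Suc d) (s j d (t m (Suc d) y))" by (simp add: algebra_simps)
      then show "?A - ?B + s j (Suc d) (s k d (t m (Suc d) y)) + (?B - ?A + s k (Suc d) (s j d (t m (Suc d) y))) = 0"
        using Suc.IH[OF tm[OF m] Suc.prems(2) Suc.prems(3)] by simp
    qed
  qed (use jj Fadd in auto)
  ultimately show ?case by simp
qed

lemma TT_triv: "p \<le> Suc n \<Longrightarrow> z \<in> F (Suc (Suc n)) \<Longrightarrow> m \<in> {1..p} \<Longrightarrow> l \<in> {1..p} \<Longrightarrow>
   t m (Suc n) (t m (Suc (Suc n)) z) = 0 \<and> t m (Suc n) (t l (Suc (Suc n)) z) + t l (Suc n) (t m (Suc (Suc n)) z) = 0"
  using top tb(1) by auto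

lemma TT_step:
  assumes np: "n < p"
    and H: "\<And>z m l. z \<in> F (Suc (Suc (Suc n))) \<Longrightarrow> m \<in> {1..p} \<Longrightarrow> l \<in> {1..p} \<Longrightarrow>
   t m (Suc (Suc n)) (t m (Suc (Suc (Suc n))) z) = 0 \<and> t m (Suc (Suc n)) (t l (Suc (Suc (Suc n))) z) + t l (Suc (Suc n)) (t m (Suc (Suc (Suc n))) z) = 0"
    and z: "z \<in> F (Suc (Suc n))" and mp: "m \<in> {1..p}" and lp: "l \<in> {1..p}"
  shows "t m (Suc n) (t m (Suc (Suc n)) z) = 0 \<and> t m (Suc n) (t l (Suc (Suc n)) z) + t l (Suc n) (t m (Suc (Suc n)) z) = 0"
proof -
  have c: "n < card {1..p}" using np by simp
  have w1F: "t m (Suc n) (t m (Suc (Suc n)) z) \<in> F n" using tb(5)[OF mp tb(5)[OF mp z]] .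
  have a1: "t m (Suc n) (t l (Suc (Suc n)) z) \<in> F n" using tb(5)[OF mp tb(5)[OF lp z]] .
  have a2: "t l (Suc n) (t m (Suc (Suc n)) z) \<in> F n" using tb(5)[OF lp tb(5)[OF mp z]] .
  have "\<forall>j\<in>{1..p}. s j n (t m (Suc n) (t m (Suc (Suc n)) z)) = 0"
  proof
    fix j assume jp: "j \<in> {1..p}"
    show "s j n (t m (Suc n) (t m (Suc (Suc n)) z)) = 0"
      unfolding STT[OF jp mp mp z] using H[OF sb(5)[OF jp z] mp mp] by simp
  qed
  then have A: "t m (Suc n) (t m (Suc (Suc n)) z) = 0" using DK[OF w1F _ c] by blast
  have "\<forall>j\<in>{1..p}. s j n (t m (Suc n) (t l (Suc (Suc n)) z) + t l (Suc n) (t m (Suc (Suc n)) z)) = 0"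
  proof
    fix j assume jp: "j \<in> {1..p}"
    let ?A = "(if j = m then t l (Suc (Suc n)) z else 0)" and ?B = "(if j = l then t m (Suc (Suc n)) z else 0)"
    let ?X = "t m (Suc (Suc n)) (t l (Suc (Suc (Suc n))) (s j (Suc (Suc n)) z))"
    let ?Y = "t l (Suc (Suc n)) (t m (Suc (Suc (Suc n))) (s j (Suc (Suc n)) z))"
    have "?A - ?B + ?X + (?B - ?A + ?Y) = ?X + ?Y" by (simp add: algebra_simps)
    then show "s j n (t m (Suc n) (t l (Suc (Suc n)) z) + t l (Suc n) (t m (Suc (Suc n)) z)) = 0"
      unfolding sb(4)[OF jp a1 a2] STT[OF jp mp lp z] STT[OF jp lp mp z]
      using H[OF sb(5)[OF jp z] mp lp] by simp
  qed
  then have B: "t m (Suc n) (t l (Suc (Suc n)) z) + t l (Suc n) (t m (Suc (Suc n)) z) = 0"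
    using DK[OF Fadd[OF a1 a2] _ c] by blast
  show ?thesis using A B by blast
qed

lemma TT_aux: "\<forall>n. p \<le> n + q \<longrightarrow> (\<forall>z m l. z \<in> F (Suc (Suc n)) \<longrightarrow> m \<in> {1..p} \<longrightarrow> l \<in> {1..p} \<longrightarrow>
   t m (Suc n) (t m (Suc (Suc n)) z) = 0 \<and> t m (Suc n) (t l (Suc (Suc n)) z) + t l (Suc n) (t m (Suc (Suc n)) z) = 0)"
proof (induction q)
  case 0 then show ?case using TT_triv by auto
next
  case (Suc q)
  show ?case
  proof (intro allI impI)
    fix n z m l assume a: "p \<le> n + Suc q" "z \<in> F (Suc (Suc n))" "m \<in> {1..p}" "l \<in> {1..p}"
    show "t m (Suc n) (t m (Suc (Suc n)) z) = 0 \<and> t m (Suc n) (t l (Suc (Suc n)) z) + t l (Suc n) (t m (Suc (Suc n)) z) = 0"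
    proof (cases "p \<le> Suc n")
      case True then show ?thesis using TT_triv a by blast
    next
      case False
      have "p \<le> Suc n + q" using a by simp
      then show ?thesis using TT_step[of n z m l] Suc.IH False a by auto
    qed
  qed
qed

lemma TT: "z \<in> F (Suc (Suc n)) \<Longrightarrow> m \<in> {1..p} \<Longrightarrow> l \<in> {1..p} \<Longrightarrow>
   t m (Suc n) (t m (Suc (Suc n)) z) = 0 \<and> t m (Suc n) (t l (Suc (Suc n)) z) + t l (Suc n) (t m (Suc (Suc n)) z) = 0"
  using TT_aux[of p] by auto

lemma INS: "sorted M \<Longrightarrow> distinct M \<Longrightarrow> set M \<subseteq> {1..p} \<Longrightarrow> a \<in> {1..p} \<Longrightarrow> f \<in> F 0 \<Longrightarrow>
  (a \<in> set M \<longrightarrow> s a (length M) (s_mon s M f) = 0) \<and>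
  (a \<notin> set M \<longrightarrow> s a (length M) (s_mon s M f) = s_mon s (insort a M) f \<or> s a (length M) (s_mon s M f) = - s_mon s (insort a M) f)"
proof (induction M)
  case Nil then show ?case by simp
next
  case (Cons b M')
  let ?y = "s_mon s M' f"
  let ?n = "length M'"
  have bp: "b \<in> {1..p}" and ap: "a \<in> {1..p}" and M'p: "set M' \<subseteq> {1..p}" using Cons.prems by auto
  have yF: "?y \<in> F ?n" using smb(5)[OF M'p Cons.prems(5)] .
  have lt: "\<forall>c\<in>set M'. b < c" using Cons.prems(1,2) by (auto simp: le_less)
  have IH: "(a \<in> set M' \<longrightarrow> s a ?n ?y = 0) \<and>
    (a \<notin> set M' \<longrightarrow> s a ?n ?y = s_mon s (insort a M') f \<or> s a ?n ?y = - s_mon s (insort a M') f)"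
    using Cons by auto
  consider "a = b" | "a < b" | "b < a" by linarith
  then show ?case
  proof cases
    case 1
    then show ?thesis using SS[OF yF ap ap] by simp
  next
    case 2
    then have "a \<notin> set (b # M')" using lt by auto
    moreover have "insort a (b # M') = a # b # M'" using 2 by simp
    ultimately show ?thesis by simp
  next
    case 3
    have ins: "insort a (b # M') = b # insort a M'" using 3 by simp
    have anti: "s a (Suc ?n) (s b ?n ?y) = - s b (Suc ?n) (s a ?n ?y)"
      using SS[OF yF ap bp] by (simp add: eq_neg_iff_add_eq_0)
    show ?thesis
    proof (cases "a \<in> set M'")
      case True
      then show ?thesis using anti IH sb(1)[OF bp] by simp
    next
      case False
      have XF: "s_mon s (insort a M') f \<in> F (Suc ?n)"
        using smb(5)[of "insort a M'" f] M'p ap Cons.prems(5) by (simp add: set_insort_key)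
      have "s a (Suc ?n) (s b ?n ?y) = s_mon s (insort a (b # M')) f \<or> s a (Suc ?n) (s b ?n ?y) = - s_mon s (insort a (b # M')) f"
        unfolding ins using anti IH False sb(2)[OF bp XF] by auto
      then show ?thesis using False 3 by simp
    qed
  qed
qed

lemma SORT: "set L \<subseteq> {1..p} \<Longrightarrow> f \<in> F 0 \<Longrightarrow>
  (distinct L \<longrightarrow> s_mon s L f = s_mon s (sort L) f \<or> s_mon s L f = - s_mon s (sort L) f) \<and>
  (\<not> distinct L \<longrightarrow> s_mon s L f = 0)"
proof (induction L)
  case Nil then show ?case by simp
next
  case (Cons a L)
  have ap: "a \<in> {1..p}" and Lp: "set L \<subseteq> {1..p}" using Cons.prems by auto
  have IH: "(distinct L \<longrightarrow> s_mon s L f = s_mon s (sort L) f \<or> s_mon s L f = - s_mon s (sort L) f) \<and>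
    (\<not> distinct L \<longrightarrow> s_mon s L f = 0)" using Cons by auto
  show ?case
  proof (cases "distinct L")
    case False
    then show ?thesis using IH sb(1)[OF ap] by simp
  next
    case True
    let ?X = "s_mon s (sort L) f"
    have sLp: "set (sort L) \<subseteq> {1..p}" using Lp by simp
    have XF: "?X \<in> F (length L)" using smb(5)[OF sLp Cons.prems(2)] by simp
    have I: "(a \<in> set L \<longrightarrow> s a (length L) ?X = 0) \<and>
      (a \<notin> set L \<longrightarrow> s a (length L) ?X = s_mon s (insort a (sort L)) f \<or> s a (length L) ?X = - s_mon s (insort a (sort L)) f)"
      using INS[of "sort L" a f] True sLp ap Cons.prems(2) by simp
    have e: "s_mon s (a # L) f = s a (length L) ?X \<or> s_mon s (a # L) f = - s a (length L) ?X"
      using IH True sb(2)[OF ap XF] by auto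
    show ?thesis
    proof (cases "a \<in> set L")
      case True
      then show ?thesis using e I by auto
    next
      case False
      then show ?thesis using e I \<open>distinct L\<close> by auto
    qed
  qed
qed

abbreviation "MM n \<equiv> mult_map p s n ` EF0 p F n"

lemma M5: "set L \<subseteq> {1..p} \<Longrightarrow> f \<in> F 0 \<Longrightarrow> s_mon s L f \<in> MM (length L)"
proof -
  assume Lp: "set L \<subseteq> {1..p}" and f: "f \<in> F 0"
  show ?thesis
  proof (cases "distinct L")
    case False
    then show ?thesis using SORT[OF Lp f] M_zero by simp
  next
    case True
    obtain v where v: "v \<in> F 0" "s_mon s L f = s_mon s (sort L) v"
    proof -
      have sLp: "set (sort L) \<subseteq> {1..p}" using Lp by simp
      from SORT[OF Lp f] True consider "s_mon s L f = s_mon s (sort L) f" | "s_mon s L f = - s_mon s (sort L) f" by blast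
      then show ?thesis
      proof cases
        case 1 then show ?thesis using that f by blast
      next
        case 2 then show ?thesis using that[of "- f"] Fneg[OF f] smb(2)[OF sLp f] by simp
      qed
    qed
    let ?T = "set L"
    have sT: "sort L = sorted_list_of_set ?T" using True by (simp add: sorted_list_of_set_sort_remdups distinct_remdups_id)
    have cT: "card ?T = length L" using True by (simp add: distinct_card)
    let ?g = "\<lambda>S. if S = ?T then v else 0"
    have gE: "?g \<in> EF0 p F (length L)" unfolding EF0_def using v(1) F0 Lp cT by auto
    have "mult_map p s (length L) ?g = (\<Sum>S\<in>{S. S \<subseteq> {1..p} \<and> card S = length L}. if S = ?T then s_mon s (sorted_list_of_set ?T) v else 0)"
      unfolding mult_map_def
    proof (rule sum.cong)
      fix S assume "S \<in> {S. S \<subseteq> {1..p} \<and> card S = length L}"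
      then have "set (sorted_list_of_set S) \<subseteq> {1..p}" using sorted_S by blast
      then show "s_mon s (sorted_list_of_set S) (?g S) = (if S = ?T then s_mon s (sorted_list_of_set ?T) v else 0)"
        using smb(1) by auto
    qed simp
    also have "\<dots> = s_mon s (sorted_list_of_set ?T) v" using finSets Lp cT by simp
    finally have "mult_map p s (length L) ?g = s_mon s L f" using v(2) sT by simp
    then show ?thesis using gE by (metis image_eqI)
  qed
qed

lemma M4: "j \<in> {1..p} \<Longrightarrow> y \<in> MM n \<Longrightarrow> s j n y \<in> MM (Suc n)"
proof -
  assume jp: "j \<in> {1..p}" and "y \<in> MM n"
  then obtain g where g: "g \<in> EF0 p F n" "y = mult_map p s n g" by blast
  have gS: "\<And>S. g S \<in> F 0" using g(1) unfolding EF0_def by auto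
  have "s j n y = (\<Sum>S\<in>{S. S \<subseteq> {1..p} \<and> card S = n}. s j n (s_mon s (sorted_list_of_set S) (g S)))"
    unfolding g(2) mult_map_def
  proof (rule lin_sum[OF md sub slin[OF jp]])
    fix S assume "S \<in> {S. S \<subseteq> {1..p} \<and> card S = n}"
    then show "s_mon s (sorted_list_of_set S) (g S) \<in> F n" using sorted_S smb(5) gS by metis
  qed
  also have "\<dots> \<in> MM (Suc n)"
  proof (rule M_sum)
    fix S assume S: "S \<in> {S. S \<subseteq> {1..p} \<and> card S = n}"
    have e: "s j n (s_mon s (sorted_list_of_set S) (g S)) = s_mon s (j # sorted_list_of_set S) (g S)"
      using sorted_S[OF S] by simp
    have st: "set (j # sorted_list_of_set S) \<subseteq> {1..p}" using sorted_S[OF S] jp by (simp only: set_simps insert_subset) blast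
    have len: "length (j # sorted_list_of_set S) = Suc n" using sorted_S[OF S] by simp
    have m: "s_mon s (j # sorted_list_of_set S) (g S) \<in> MM (Suc n)"
      using M5[OF st gS] unfolding len .
    show "s j n (s_mon s (sorted_list_of_set S) (g S)) \<in> MM (Suc n)" unfolding e by (rule m)
  qed
  finally show ?thesis .
qed

lemma SURJ: "x \<in> F n \<Longrightarrow> x \<in> MM n"
proof (induction n arbitrary: x)
  case 0
  then show ?case using M5[of "[]" x] by simp
next
  case (Suc n)
  note outerIH = Suc.IH
  note outerP = Suc.prems
  have inv: "k \<le> p \<Longrightarrow> \<exists>xk\<in>F (Suc n). x - xk \<in> MM (Suc n) \<and> (\<forall>j\<in>{1..k}. t j (Suc n) xk = 0)" for k
  proof (induction k)
    case 0
    then show ?case using outerP M_zero by (intro bexI[of _ x]) auto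
  next
    case (Suc k)
    then obtain xk where xk: "xk \<in> F (Suc n)" "x - xk \<in> MM (Suc n)" "\<forall>j\<in>{1..k}. t j (Suc n) xk = 0" by auto
    define jj where "jj = Suc k"
    have jjp: "jj \<in> {1..p}" using Suc.prems jj_def by auto
    let ?z = "s jj (Suc n) xk"
    let ?x' = "t jj (Suc (Suc n)) ?z"
    have zF: "?z \<in> F (Suc (Suc n))" using sb(5)[OF jjp xk(1)] .
    have x'F: "?x' \<in> F (Suc n)" using tb(5)[OF jjp zF] .
    have "s jj n (t jj (Suc n) xk) + ?x' = xk" using R1[OF jjp jjp xk(1)] by simp
    then have e: "xk - ?x' = s jj n (t jj (Suc n) xk)" by (metis add_diff_cancel_right')
    have "t jj (Suc n) xk \<in> MM n" using outerIH tb(5)[OF jjp xk(1)] by blast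
    then have "xk - ?x' \<in> MM (Suc n)" unfolding e by (rule M4[OF jjp])
    then have "(x - xk) + (xk - ?x') \<in> MM (Suc n)" using M_add xk(2) by blast
    then have A: "x - ?x' \<in> MM (Suc n)" by simp
    have B: "\<forall>j\<in>{1..Suc k}. t j (Suc n) ?x' = 0"
    proof
      fix j assume j: "j \<in> {1..Suc k}"
      show "t j (Suc n) ?x' = 0"
      proof (cases "j = jj")
        case True
        then show ?thesis using TT[OF zF jjp jjp] by simp
      next
        case False
        then have jk: "j \<in> {1..k}" and jp: "j \<in> {1..p}" using j jj_def Suc.prems by auto
        have "t j (Suc (Suc n)) ?z = (if jj = j then xk else 0) - s jj n (t j (Suc n) xk)"
          using tsS[OF jjp jp xk(1)] .
        then have z0: "t j (Suc (Suc n)) ?z = 0" using False xk(3) jk sb(1)[OF jjp] by simp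
        have "t j (Suc n) ?x' + t jj (Suc n) (t j (Suc (Suc n)) ?z) = 0" using TT[OF zF jp jjp] by simp
        then show ?thesis using z0 tb(1)[OF jjp] by simp
      qed
    qed
    show ?case using A B x'F by blast
  qed
  obtain xp where xp: "xp \<in> F (Suc n)" "x - xp \<in> MM (Suc n)" "\<forall>j\<in>{1..p}. t j (Suc n) xp = 0"
    using inv[of p] by auto
  have "xp = 0" using Kl[OF _ xp(1)] xp(3) by auto
  then show ?case using xp(2) by simp
qed

lemma INJ: "g \<in> EF0 p F n \<Longrightarrow> mult_map p s n g = 0 \<Longrightarrow> g = (\<lambda>S. 0)"
proof (rule ext)
  fix T assume g: "g \<in> EF0 p F n" and m0: "mult_map p s n g = 0"
  have gS: "\<And>S. g S \<in> F 0" using g unfolding EF0_def by auto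
  show "g T = 0"
  proof (cases "T \<in> {S. S \<subseteq> {1..p} \<and> card S = n}")
    case False
    then show ?thesis using g unfolding EF0_def by auto
  next
    case True
    let ?Sets = "{S. S \<subseteq> {1..p} \<and> card S = n}"
    have finT: "finite T" using True finite_subset by auto
    define C where "C = sorted_list_of_set ({1..p} - T)"
    have Cp: "set C \<subseteq> {1..p}" and Cd: "distinct C" and Cs: "set C = {1..p} - T" unfolding C_def by auto
    have l: "lin_on scale (F n) (F (n + length C)) (sg s n C)" using sg_lin[OF Cp] .
    have "sg s n C (mult_map p s n g) = 0" using m0 lin_basic(1)[OF md sub l] by simp
    moreover have "sg s n C (mult_map p s n g) = (\<Sum>S\<in>?Sets. sg s n C (s_mon s (sorted_list_of_set S) (g S)))"
      unfolding mult_map_def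
    proof (rule lin_sum[OF md sub l])
      fix S assume "S \<in> ?Sets"
      then show "s_mon s (sorted_list_of_set S) (g S) \<in> F n" using sorted_S smb(5) gS by metis
    qed
    moreover have "\<dots> = (\<Sum>S\<in>?Sets. if S = T then s_mon s (C @ sorted_list_of_set T) (g T) else 0)"
    proof (rule sum.cong)
      fix S assume S: "S \<in> ?Sets"
      have e: "sg s n C (s_mon s (sorted_list_of_set S) (g S)) = s_mon s (C @ sorted_list_of_set S) (g S)"
        unfolding s_mon_sg using sg_append sorted_S[OF S] by metis
      show "sg s n C (s_mon s (sorted_list_of_set S) (g S)) = (if S = T then s_mon s (C @ sorted_list_of_set T) (g T) else 0)"
      proof (cases "S = T")
        case True then show ?thesis using e by simp
      next
        case False
        have "\<not> S \<subseteq> T"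
        proof
          assume "S \<subseteq> T"
          then have "S = T" using card_subset_eq[OF finT] S True by auto
          then show False using False by simp
        qed
        then obtain x where "x \<in> S" "x \<notin> T" by blast
        then have nd: "\<not> distinct (C @ sorted_list_of_set S)" using Cs sorted_S[OF S] by auto
        have "set (C @ sorted_list_of_set S) \<subseteq> {1..p}" using Cp sorted_S[OF S] by (simp only: set_append Un_subset_iff) blast
        then have "s_mon s (C @ sorted_list_of_set S) (g S) = 0" using SORT[OF _ gS[of S]] nd by blast
        then show ?thesis using e False by simp
      qed
    qed simp
    moreover have "\<dots> = s_mon s (C @ sorted_list_of_set T) (g T)" using finSets True by simp
    ultimately have z: "s_mon s (C @ sorted_list_of_set T) (g T) = 0" by simp
    let ?L = "C @ sorted_list_of_set T"
    have Ld: "distinct ?L" using Cd Cs sorted_S[OF True] by auto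
    have Lp: "set ?L \<subseteq> {1..p}" using Cp sorted_S[OF True] by (simp only: set_append Un_subset_iff) blast
    have "s_mon s (sort ?L) (g T) = 0" using SORT[OF Lp gS[of T]] Ld z by auto
    moreover have "distinct (sort ?L)" "set (sort ?L) \<subseteq> {1..p}" using Ld Lp by auto
    ultimately show ?thesis using gen[OF gS[of T], of "sort ?L"] unfolding s_mon_sg by auto
  qed
qed

end

theorem propositionA3:
  fixes scale :: "'a::comm_ring_1 \<Rightarrow> 'm::ab_group_add \<Rightarrow> 'm"
    and p :: nat and F :: "nat \<Rightarrow> 'm set"
    and s t :: "nat \<Rightarrow> nat \<Rightarrow> 'm \<Rightarrow> 'm"
  assumes "p \<ge> 1"
    and "graded_W_module scale p F s t"
    and "F 0 \<noteq> {0}"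
  shows "(\<forall>i\<le>p. F i \<noteq> {0}) \<and>
    ((\<forall>i\<ge>p + 1. F i = {0}) \<longrightarrow>
       (\<forall>j\<in>{1..p}. \<forall>k\<in>{1..p}. \<forall>f\<in>F 0.
          s j 1 (s j 0 f) = 0 \<and> s j 1 (s k 0 f) + s k 1 (s j 0 f) = 0) \<and>
       (\<forall>i. bij_betw (mult_map p s i) (EF0 p F i) (F i)))"
proof -
  interpret gw scale p F s t by unfold_locales (rule assms(2))
  obtain f where f: "f \<in> F 0" "f \<noteq> 0" using assms(3) F0 by blast
  have P1: "\<forall>i\<le>p. F i \<noteq> {0}"
  proof (intro allI impI)
    fix i assume i: "i \<le> p"
    let ?L = "[1..<Suc i]"
    have d: "distinct ?L" and st: "set ?L \<subseteq> {1..p}" using i by auto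
    have h4: "1 \<le> (0::nat) \<longrightarrow> (\<forall>k\<in>{1..p}. t k 0 f = 0)" by simp
    have "sg s 0 ?L f \<noteq> 0" using gen[OF f(1) d st h4] f(2) by blast
    moreover have "sg s 0 ?L f \<in> F i" using sgF[OF f(1) st] by (simp only: length_upt diff_Suc_1 add_0)
    ultimately show "F i \<noteq> {0}" by blast
  qed
  have P2: "(\<forall>j\<in>{1..p}. \<forall>k\<in>{1..p}. \<forall>f\<in>F 0.
          s j 1 (s j 0 f) = 0 \<and> s j 1 (s k 0 f) + s k 1 (s j 0 f) = 0) \<and>
       (\<forall>i. bij_betw (mult_map p s i) (EF0 p F i) (F i))" if top: "\<forall>i\<ge>p + 1. F i = {0}"
  proof -
    interpret gwt scale p F s t by unfold_locales (rule top)
    have A: "\<forall>j\<in>{1..p}. \<forall>k\<in>{1..p}. \<forall>f\<in>F 0.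
          s j 1 (s j 0 f) = 0 \<and> s j 1 (s k 0 f) + s k 1 (s j 0 f) = 0"
      using SS[where d = 0] by simp
    have B: "bij_betw (mult_map p s i) (EF0 p F i) (F i)" for i
    proof (rule bij_betw_imageI)
      show "inj_on (mult_map p s i) (EF0 p F i)"
      proof (rule inj_onI)
        fix g h assume g: "g \<in> EF0 p F i" and h: "h \<in> EF0 p F i" and e: "mult_map p s i g = mult_map p s i h"
        have "mult_map p s i (\<lambda>S. g S - h S) = 0" using mm_diff[OF g h] e by simp
        then have "(\<lambda>S. g S - h S) = (\<lambda>S. 0)" using INJ[OF EF0_diff[OF g h]] by blast
        then show "g = h" by (metis eq_iff_diff_eq_0 ext)
      qed
      show "mult_map p s i ` EF0 p F i = F i" using mm_F SURJ by blast
    qed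
    show ?thesis using A B by blast
  qed
  show ?thesis using P1 P2 by blast
qed

end
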